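(* For every real $0<B<1$ and positive integer $L$, $$\sum_{\ell=1}^L\frac{L+1-\ell}{\sin^2\left(\frac{\pi\ell B}{L}\right)}=\frac{L^3}{6B^2}-\frac{L^2\log L}{\pi^2B^2}+O_B(L^2),$$ where the implied constant depends only on $B$. *)

theory Defs
  imports "HOL-Analysis.Analysis"
begin

end

theory Submission
  imports Defs "HOL-Analysis.Analysis"
begin

lemma cos_lb: fixes x :: real shows "1 - x^2/2 \<le> cos x"
proof -
  have "cos x = 1 - 2 * (sin (x/2))^2" using cos_double_sin[of "x/2"] by simp
  moreover have "(sin (x/2))^2 \<le> (x/2)^2"
    using abs_sin_x_le_abs_x[of "x/2"] by (metis abs_ge_zero power2_abs power_mono)
  ultimately show ?thesis by (simp add: power_divide)
qed

lemma sin_lb3: fixes x :: real assumes "0 \<le> x" shows "x - x^3/6 \<le> sin x"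
proof -
  have "(\<lambda>t. t^3/6 - t + sin t) 0 \<le> (\<lambda>t. t^3/6 - t + sin t) x"
  proof (rule DERIV_nonneg_imp_nondecreasing[OF assms])
    fix t :: real assume "0 \<le> t" "t \<le> x"
    show "\<exists>y. ((\<lambda>t. t^3/6 - t + sin t) has_real_derivative y) (at t) \<and> 0 \<le> y"
      apply (rule exI[of _ "t^2/2 - 1 + cos t"])
      using cos_lb[of t]
      by (auto intro!: derivative_eq_intros simp: field_simps power2_eq_square power3_eq_cube)
  qed
  thus ?thesis by simp
qed

lemma sin_lin_lb:
  fixes B x :: real
  assumes B: "0 < B" "B < 1" and x: "0 < x" "x \<le> pi * B"
  shows "min (1/2) (sin (pi*B) / pi) * x \<le> sin x"
proof (cases "x \<le> pi/2")
  case True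
  have "pi \<le> 3.2" using pi_approx(2) by simp
  hence x16: "x \<le> 1.6" using True by linarith
  have "x * x \<le> 1.6 * 1.6" using x x16 by (intro mult_mono) auto
  hence "x * x \<le> 3" by linarith
  hence "(x * x) * x \<le> 3 * x" using x by (intro mult_right_mono) auto
  hence "x / 2 \<le> x - x^3/6" by (simp add: power3_eq_cube)
  also have "\<dots> \<le> sin x" using sin_lb3 x by simp
  finally have "x/2 \<le> sin x" .
  moreover have "min (1/2) (sin (pi*B) / pi) * x \<le> 1/2 * x" using x by (intro mult_right_mono min.cobounded1) auto
  ultimately show ?thesis by simp
next
  case False
  have pB: "pi * B < pi" using B by simp
  have "sin (pi - pi*B) \<le> sin (pi - x)"
    apply (rule sin_monotone_2pi_le) using False x pB by linarith+
  hence s: "sin (pi*B) \<le> sin x" by simp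
  have "sin (pi*B) > 0" using B pB by (intro sin_gt_zero) auto
  hence "x \<le> pi" using x pB by linarith
  hence "sin (pi*B) / pi * x \<le> sin (pi*B)"
    using \<open>sin (pi*B) > 0\<close> x by (simp add: field_simps)
  moreover have "min (1/2) (sin (pi*B) / pi) * x \<le> sin (pi*B) / pi * x" using x by (intro mult_right_mono) auto
  ultimately show ?thesis using s by simp
qed


lemma g_bound:
  fixes B x :: real
  assumes B: "0 < B" "B < 1" and x: "0 < x" "x \<le> pi * B"
  defines "c \<equiv> min (1/2) (sin (pi*B) / pi)"
  shows "0 \<le> 1 / (sin x)^2 - 1 / x^2 \<and> 1 / (sin x)^2 - 1 / x^2 \<le> 1 / (3 * c^2)"
proof -
  have pB: "pi * B < pi" using B by simp
  have "sin (pi*B) > 0" using B pB by (intro sin_gt_zero) auto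
  hence c: "c > 0" unfolding c_def by simp
  have "x < pi" using x pB by linarith
  hence s0: "sin x > 0" using x by (intro sin_gt_zero) auto
  have sx: "sin x \<le> x" using sin_x_le_x x by simp
  have cs: "c * x \<le> sin x" unfolding c_def using sin_lin_lb[OF B x] .
  have e: "1 / (sin x)^2 - 1 / x^2 = (x - sin x) * (x + sin x) / (x^2 * (sin x)^2)"
    using s0 x by (simp add: field_simps power2_eq_square)
  have a1: "0 \<le> (x - sin x) * (x + sin x)" using sx s0 by simp
  have a2: "(x - sin x) * (x + sin x) \<le> (x^3/6) * (2*x)"
    apply (rule mult_mono) using sin_lb3[of x] x sx s0 by auto
  have "(c*x)^2 \<le> (sin x)^2" using cs c x by (intro power_mono) auto
  hence "x^2 * (c*x)^2 \<le> x^2 * (sin x)^2" by (intro mult_left_mono) auto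
  hence a3: "c^2 * x^4 \<le> x^2 * (sin x)^2" by (simp add: power_mult_distrib power4_eq_xxxx power2_eq_square mult_ac)
  have p: "0 < c^2 * x^4" using c x by simp
  have "(x - sin x) * (x + sin x) / (x^2 * (sin x)^2) \<le> (x^4/3) / (c^2 * x^4)"
    apply (rule frac_le) using a1 a2 a3 p by (auto simp: power3_eq_cube power4_eq_xxxx)
  also have "\<dots> = 1 / (3*c^2)" using x by (simp add: field_simps)
  finally show ?thesis using a1 unfolding e by simp
qed

lemma H2_bounds:
  fixes L :: nat assumes L: "L \<ge> 1"
  shows "pi^2/6 - 1 / real L \<le> (\<Sum>l=1..L. 1 / (real l)^2)"
    and "(\<Sum>l=1..L. 1 / (real l)^2) \<le> pi^2/6"
proof -
  define f where "f = (\<lambda>n::nat. 1 / (real n + 1)^2)"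
  have S: "f sums (pi^2/6)" using inverse_squares_sums unfolding f_def by (simp add: add.commute)
  have sm: "summable f" using S by (rule sums_summable)
  have fin: "(\<Sum>l=1..L. 1 / (real l)^2) = (\<Sum>n<L. f n)"
    unfolding f_def by (simp add: sum.atLeast1_atMost_eq add.commute)
  have f0: "\<And>n. 0 \<le> f n" unfolding f_def by simp
  have "(\<Sum>n<L. f n) \<le> suminf f" by (rule sum_le_suminf[OF sm]) (auto simp: f0)
  thus "(\<Sum>l=1..L. 1 / (real l)^2) \<le> pi^2/6" using fin sums_unique[OF S] by simp
  define g where "g = (\<lambda>n::nat. inverse (real (n + L)))"
  have gl: "g \<longlonglongrightarrow> 0" unfolding g_def
    using LIMSEQ_ignore_initial_segment[OF lim_inverse_n, of L] by simp
  have T: "(\<lambda>n. g n - g (Suc n)) sums (g 0 - 0)" by (rule telescope_sums'[OF gl])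
  have le: "f (n + L) \<le> g n - g (Suc n)" for n
  proof -
    have p: "real (n+L) > 0" using L by simp
    have "g n - g (Suc n) = 1 / (real (n+L) * (real (n+L) + 1))"
      unfolding g_def using p by (simp add: field_simps)
    also have "1 / (real (n+L) + 1)^2 \<le> \<dots>"
      using p by (intro divide_left_mono) (auto simp: power2_eq_square intro!: mult_pos_pos)
    finally show ?thesis unfolding f_def by (simp add: add.commute add.left_commute)
  qed
  have "(\<Sum>n. f (n + L)) \<le> (\<Sum>n. g n - g (Suc n))"
    by (rule suminf_le[OF le]) (use summable_ignore_initial_segment[OF sm] sums_summable[OF T] in auto)
  also have "\<dots> = 1 / real L" using sums_unique[OF T] unfolding g_def by (simp add: inverse_eq_divide)
  finally have "(\<Sum>n. f (n + L)) \<le> 1 / real L" .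
  moreover have "suminf f = (\<Sum>n. f (n + L)) + (\<Sum>n<L. f n)" by (rule suminf_split_initial_segment[OF sm])
  moreover have "suminf f = pi^2/6" using sums_unique[OF S] by simp
  ultimately show "pi^2/6 - 1 / real L \<le> (\<Sum>l=1..L. 1 / (real l)^2)"
    using fin by linarith
qed

lemma H_bounds:
  fixes L :: nat assumes L: "L \<ge> 1"
  shows "ln (real L) \<le> (\<Sum>l=1..L. 1 / real l)" and "(\<Sum>l=1..L. 1 / real l) \<le> ln (real L) + 1"
proof -
  have h: "(\<Sum>l=1..L. 1 / real l) = harm L" unfolding harm_def by (simp add: inverse_eq_divide)
  show "ln (real L) \<le> (\<Sum>l=1..L. 1 / real l)" using euler_mascheroni_sequence_nonneg[of L] L h by simp
  obtain m where m: "L = Suc m" using L by (cases L) auto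
  have "harm (Suc m) - ln (real (Suc m)) \<le> harm (Suc 0) - ln (real (Suc 0))"
    using decseq_harm_diff_ln unfolding decseq_def by (metis le0)
  thus "(\<Sum>l=1..L. 1 / real l) \<le> ln (real L) + 1" using h m by (simp add: harm_def)
qed


theorem lemma8:
  fixes B :: real
  assumes "0 < B" and "B < 1"
  shows "\<exists>C. \<forall>L::nat. L \<ge> 1 \<longrightarrow>
           \<bar>(\<Sum>l=1..L. (real L + 1 - real l) / (sin (pi * real l * B / real L))^2)
             - (real L ^ 3 / (6 * B^2) - real L ^ 2 * ln (real L) / (pi^2 * B^2))\<bar>
           \<le> C * real L ^ 2"
proof -
  define c where "c = min (1/2) (sin (pi*B) / pi)"
  define M where "M = 1 / (3 * c^2)"
  have M0: "0 \<le> M" unfolding M_def by simp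
  show ?thesis
  proof (intro exI allI impI)
    fix L :: nat assume L: "L \<ge> 1"
    have Lp: "real L > 0" using L by simp
    define x where "x = (\<lambda>l::nat. pi * real l * B / real L)"
    define g where "g = (\<lambda>l. 1 / (sin (x l))^2 - 1 / (x l)^2)"
    define K where "K = (real L)^2 / (pi^2 * B^2)"
    have K0: "K \<ge> 0" unfolding K_def by simp
    define H2 where "H2 = (\<Sum>l=1..L. 1 / (real l)^2)"
    define H where "H = (\<Sum>l=1..L. 1 / real l)"
    have xr: "0 < x l \<and> x l \<le> pi * B" if "l \<in> {1..L}" for l
    proof -
      have l: "1 \<le> real l" "real l \<le> real L" using that by auto
      have "0 < x l" unfolding x_def using l Lp assms by simp
      moreover have "pi * B * real l \<le> pi * B * real L" using l assms by (intro mult_left_mono) auto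
      hence "x l \<le> pi * B" unfolding x_def using Lp by (simp add: field_simps)
      ultimately show ?thesis by simp
    qed
    have gb: "0 \<le> g l \<and> g l \<le> M" if "l \<in> {1..L}" for l
      unfolding g_def M_def c_def using g_bound[OF assms] xr[OF that] by blast
    have ix: "1 / (x l)^2 = K / (real l)^2" if "l \<in> {1..L}" for l
      unfolding x_def K_def using that Lp assms by (simp add: field_simps power2_eq_square)
    have split: "(\<Sum>l=1..L. (real L + 1 - real l) / (sin (pi * real l * B / real L))^2)
       = (\<Sum>l=1..L. (real L + 1 - real l) * (K / (real l)^2)) + (\<Sum>l=1..L. (real L + 1 - real l) * g l)"
      unfolding sum.distrib[symmetric]
    proof (rule sum.cong[OF refl])
      fix l assume l: "l \<in> {1..L}"
      show "(real L + 1 - real l) / (sin (pi * real l * B / real L))^2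
         = (real L + 1 - real l) * (K / (real l)^2) + (real L + 1 - real l) * g l"
        using ix[OF l] unfolding g_def x_def by (simp add: field_simps)
    qed
    have A: "(\<Sum>l=1..L. (real L + 1 - real l) * (K / (real l)^2)) = K * ((real L + 1) * H2 - H)"
    proof -
      have "(\<Sum>l=1..L. (real L + 1 - real l) * (K / (real l)^2))
          = (\<Sum>l=1..L. K * ((real L + 1) * (1 / (real l)^2) - 1 / real l))"
        by (rule sum.cong[OF refl]) (auto simp: field_simps power2_eq_square)
      also have "\<dots> = K * (\<Sum>l=1..L. (real L + 1) * (1 / (real l)^2) - 1 / real l)"
        by (simp only: sum_distrib_left)
      also have "(\<Sum>l=1..L. (real L + 1) * (1 / (real l)^2) - 1 / real l) = (real L + 1) * H2 - H"
        unfolding H2_def H_def sum_subtractf sum_distrib_left by (rule refl)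
      finally show ?thesis .
    qed
    define E where "E = (\<Sum>l=1..L. (real L + 1 - real l) * g l)"
    have E0: "0 \<le> E" unfolding E_def
      by (rule sum_nonneg) (use gb in \<open>auto intro!: mult_nonneg_nonneg\<close>)
    have "E \<le> (\<Sum>l=1..L. real L * M)" unfolding E_def
    proof (rule sum_mono)
      fix l assume l: "l \<in> {1..L}"
      show "(real L + 1 - real l) * g l \<le> real L * M"
        apply (rule mult_mono) using l gb[OF l] M0 by auto
    qed
    hence E1: "E \<le> M * (real L)^2" by (simp add: power2_eq_square mult_ac)
    have h2l: "pi^2/6 - 1 / real L \<le> H2" "H2 \<le> pi^2/6" unfolding H2_def using H2_bounds[OF L] by auto
    have hl: "ln (real L) \<le> H" "H \<le> ln (real L) + 1" unfolding H_def using H_bounds[OF L] by auto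
    have pi6: "pi^2/6 \<le> 2"
    proof -
      have "pi \<le> 3.2" using pi_approx(2) by simp
      hence "pi * pi \<le> 3.2 * 3.2" by (intro mult_mono) auto
      thus ?thesis by (simp add: power2_eq_square)
    qed
    have H2p: "0 \<le> H2" unfolding H2_def by (rule sum_nonneg) auto
    define D where "D = (real L + 1) * H2 - H - pi^2 * real L / 6 + ln (real L)"
    have Deq: "D = real L * (H2 - pi^2/6) + H2 - (H - ln (real L))" unfolding D_def by (simp add: algebra_simps)
    have "real L * (H2 - pi^2/6) \<ge> real L * (- 1 / real L)" using h2l(1) Lp by (intro mult_left_mono) auto
    hence d1: "real L * (H2 - pi^2/6) \<ge> -1" using Lp by simp
    have d2: "real L * (H2 - pi^2/6) \<le> 0" using h2l(2) Lp by (simp add: mult_nonneg_nonpos)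
    have Db: "\<bar>D\<bar> \<le> 2" unfolding Deq using d1 d2 hl h2l H2p pi6 by linarith
    have main: "real L ^ 3 / (6 * B^2) - real L ^ 2 * ln (real L) / (pi^2 * B^2) = K * (pi^2 * real L / 6 - ln (real L))"
      unfolding K_def using assms by (simp add: field_simps power2_eq_square power3_eq_cube)
    have diff: "(\<Sum>l=1..L. (real L + 1 - real l) / (sin (pi * real l * B / real L))^2)
             - (real L ^ 3 / (6 * B^2) - real L ^ 2 * ln (real L) / (pi^2 * B^2)) = K * D + E"
      unfolding split A main E_def[symmetric] D_def by (simp add: algebra_simps)
    have "\<bar>K * D\<bar> \<le> K * 2" unfolding abs_mult using K0 Db by (simp add: mult_left_mono)
    hence "\<bar>K * D + E\<bar> \<le> K * 2 + M * (real L)^2" using E0 E1 by linarith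
    also have "\<dots> = (M + 2 / (pi^2 * B^2)) * real L ^ 2" unfolding K_def by (simp add: field_simps)
    finally show "\<bar>(\<Sum>l=1..L. (real L + 1 - real l) / (sin (pi * real l * B / real L))^2)
             - (real L ^ 3 / (6 * B^2) - real L ^ 2 * ln (real L) / (pi^2 * B^2))\<bar>
           \<le> (M + 2 / (pi^2 * B^2)) * real L ^ 2" unfolding diff .
  qed
qed

end
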